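(* Let $\mathcal C=\{\hat\mu_1,\dots,\hat\mu_{k'}\}\subset\mathbb{R}^n$ with Voronoi partition $V_1,\dots,V_{k'}$, let $\sigma>0$, $R\ge0$, $\epsilon\in(0,1)$, and let $\mu\in\mathbb{R}^n$ satisfy $\|\mu-\hat\mu_i\|\le R$ for some $i$. Let $Y=\mu+\sigma\xi$ with $\xi\sim\mathcal N(0,I_n)$, and let $i'$ be the (random) index with $Y\in V_{i'}$. Then with probability at least $1-\epsilon$, $$\|\mu-\hat\mu_{i'}\|\le3R+2\sqrt2\,\sigma\sqrt{\ln(k'/\epsilon)}.$$
   Context: The Voronoi partition of $\{\hat\mu_1,\dots,\hat\mu_{k'}\}$ is $V_j=\{x:\|x-\hat\mu_j\|=\min_{j'}\|x-\hat\mu_{j'}\|\}$, with ties (a null set) broken arbitrarily so that the $V_j$ partition $\mathbb{R}^n$. *)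

theory Defs
  imports "HOL-Analysis.Analysis" "HOL-Probability.Probability"
begin

definition std_gaussian :: "(real ^ 'n::finite) measure" where
  "std_gaussian = density lborel
     (\<lambda>x. ennreal ((2 * pi) powr (- real CARD('n) / 2) * exp (- (norm x)\<^sup>2 / 2)))"

definition voronoi_partition ::
  "nat \<Rightarrow> (nat \<Rightarrow> 'a::real_normed_vector) \<Rightarrow> (nat \<Rightarrow> 'a set) \<Rightarrow> bool" where
  "voronoi_partition k c V \<longleftrightarrow>
     (\<forall>x. \<exists>!j. j < k \<and> x \<in> V j) \<and>
     (\<forall>j<k. \<forall>x\<in>V j. \<forall>j'<k. norm (x - c j) \<le> norm (x - c j'))"

end

theory Submission
  imports Defs
begin


lemma gauss1: "(\<integral>\<^sup>+y. ennreal (exp (- y\<^sup>2 / 2)) \<partial>lborel) = ennreal (sqrt (2*pi))"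
proof -
  have "(\<integral>\<^sup>+y. ennreal (std_normal_density y) \<partial>lborel) = ennreal 1"
    by (subst nn_integral_eq_integral) auto
  moreover have "(\<lambda>y. ennreal (exp (- y\<^sup>2 / 2))) = (\<lambda>y. ennreal (sqrt (2*pi)) * ennreal (std_normal_density y))"
    by (auto simp: std_normal_density_def ennreal_mult'[symmetric] fun_eq_iff)
  ultimately show ?thesis
    by (simp add: nn_integral_cmult)
qed


lemma h3: "sqrt (2*pi) ^ n = (2*pi) powr (real n / 2)"
proof -
  have a: "sqrt (2*pi) ^ n = sqrt (2*pi) powr real n" by (rule powr_realpow[symmetric]) simp
  have b: "sqrt (2*pi) = (2*pi) powr (1/2)" by (rule powr_half_sqrt[symmetric]) simp
  have c: "((2*pi) powr (1/2)) powr real n = (2*pi) powr (1/2 * real n)" by (rule powr_powr)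
  show ?thesis using a b c by simp
qed
lemma h4: "(2 * pi) powr (- real n / 2) * sqrt (2*pi) ^ n = 1"
  unfolding h3 by (simp add: powr_add[symmetric])



lemma h1: "(norm (x::'a::euclidean_space))\<^sup>2 = (\<Sum>b\<in>Basis. (x \<bullet> b)\<^sup>2)"
proof -
  have "(norm x)\<^sup>2 = x \<bullet> x" by (rule power2_norm_eq_inner)
  also have "\<dots> = (\<Sum>b\<in>Basis. (x \<bullet> b) * (x \<bullet> b))" by (rule euclidean_inner)
  also have "\<dots> = (\<Sum>b\<in>Basis. (x \<bullet> b)\<^sup>2)" by (simp only: power2_eq_square)
  finally show ?thesis .
qed
lemma s1: "exp (- (norm (x::'a::euclidean_space))\<^sup>2 / 2) = (\<Prod>b\<in>Basis. exp (- (x \<bullet> b)\<^sup>2 / 2))"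
proof -
  have "(\<Sum>b\<in>Basis. - (x \<bullet> b)\<^sup>2 / 2) = (\<Sum>b\<in>Basis. - (x \<bullet> b)\<^sup>2) / 2"
    by (rule sum_divide_distrib[symmetric])
  also have "\<dots> = - (\<Sum>b\<in>Basis. (x \<bullet> b)\<^sup>2) / 2" by (simp only: sum_negf)
  also have "\<dots> = - (norm x)\<^sup>2 / 2" by (simp only: h1)
  finally have "exp (- (norm x)\<^sup>2 / 2) = exp (\<Sum>b\<in>Basis. - (x \<bullet> b)\<^sup>2 / 2)" by (rule arg_cong[OF sym])
  also have "\<dots> = (\<Prod>b\<in>Basis. exp (- (x \<bullet> b)\<^sup>2 / 2))" by (rule exp_sum) simp
  finally show ?thesis .
qed
lemma s2: "ennreal ((2 * pi) powr (- real DIM('a) / 2) * exp (- (norm (x::'a::euclidean_space))\<^sup>2 / 2)) =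
       ennreal ((2 * pi) powr (- real DIM('a) / 2)) * (\<Prod>b\<in>Basis. ennreal (exp (- (x \<bullet> b)\<^sup>2 / 2)))"
proof -
  have "ennreal ((2 * pi) powr (- real DIM('a) / 2) * exp (- (norm x)\<^sup>2 / 2)) =
     ennreal ((2 * pi) powr (- real DIM('a) / 2)) * ennreal (exp (- (norm x)\<^sup>2 / 2))"
    by (rule ennreal_mult) auto
  also have "ennreal (exp (- (norm x)\<^sup>2 / 2)) = (\<Prod>b\<in>Basis. ennreal (exp (- (x \<bullet> b)\<^sup>2 / 2)))"
    unfolding s1 by (rule prod_ennreal[symmetric]) auto
  finally show ?thesis .
qed
lemma s3: "(\<integral>\<^sup>+(x::'a::euclidean_space). (\<Prod>b\<in>Basis. ennreal (exp (- (x \<bullet> b)\<^sup>2 / 2))) \<partial>lborel) = (\<Prod>b\<in>(Basis::'a set). (\<integral>\<^sup>+y. ennreal (exp (- y\<^sup>2 / 2)) \<partial>lborel))"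
    by (rule nn_integral_lborel_prod) auto
lemma s4: "(\<Prod>b\<in>(Basis::'a::euclidean_space set). ennreal (sqrt (2*pi))) = ennreal (sqrt (2*pi) ^ DIM('a))"
    unfolding prod_constant by (rule ennreal_power) simp
lemma gauss_total:
  "(\<integral>\<^sup>+x. ennreal ((2 * pi) powr (- real DIM('a) / 2) * exp (- (norm (x::'a::euclidean_space))\<^sup>2 / 2)) \<partial>lborel) = 1"
proof -
  define C where "C = (2 * pi) powr (- real DIM('a) / 2)"
  have e1: "(\<integral>\<^sup>+x. ennreal (C * exp (- (norm (x::'a))\<^sup>2 / 2)) \<partial>lborel)
    = (\<integral>\<^sup>+x. ennreal C * (\<Prod>b\<in>Basis. ennreal (exp (- ((x::'a) \<bullet> b)\<^sup>2 / 2))) \<partial>lborel)"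
    unfolding C_def by (rule nn_integral_cong) (rule s2)
  have e2: "(\<integral>\<^sup>+x. ennreal C * (\<Prod>b\<in>Basis. ennreal (exp (- ((x::'a) \<bullet> b)\<^sup>2 / 2))) \<partial>lborel)
     = ennreal C * (\<integral>\<^sup>+x. (\<Prod>b\<in>Basis. ennreal (exp (- ((x::'a) \<bullet> b)\<^sup>2 / 2))) \<partial>lborel)"
    by (rule nn_integral_cmult) measurable
  have e3: "(\<integral>\<^sup>+x. (\<Prod>b\<in>Basis. ennreal (exp (- ((x::'a) \<bullet> b)\<^sup>2 / 2))) \<partial>lborel) = ennreal (sqrt (2*pi) ^ DIM('a))"
    unfolding s3 gauss1 by (rule s4)
  have e4: "ennreal C * ennreal (sqrt (2*pi) ^ DIM('a)) = ennreal (C * sqrt (2*pi) ^ DIM('a))"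
    by (rule ennreal_mult[symmetric]) (auto simp: C_def)
  have e5: "C * sqrt (2*pi) ^ DIM('a) = 1" unfolding C_def by (rule h4)
  have "(\<integral>\<^sup>+x. ennreal (C * exp (- (norm (x::'a))\<^sup>2 / 2)) \<partial>lborel) = 1"
    unfolding e1 e2 e3 e4 e5 by (rule ennreal_1)
  then show ?thesis unfolding C_def .
qed

definition gd :: "'a::euclidean_space \<Rightarrow> real" where
 "gd x = (2 * pi) powr (- real DIM('a) / 2) * exp (- (norm x)\<^sup>2 / 2)"

lemma gd_meas[measurable]: "gd \<in> borel_measurable borel"
  unfolding gd_def by measurable

lemma shift_int:
  fixes f :: "'a::euclidean_space \<Rightarrow> ennreal" and c :: 'a
  assumes [measurable]: "f \<in> borel_measurable borel"
  shows "(\<integral>\<^sup>+x. f (c + x) \<partial>lborel) = (\<integral>\<^sup>+x. f x \<partial>lborel)"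
proof -
  have "(\<integral>\<^sup>+x. f x \<partial>lborel) = (\<integral>\<^sup>+x. f x \<partial>(distr lborel borel ((+) c)))"
    by (simp add: lborel_distr_plus)
  also have "\<dots> = (\<integral>\<^sup>+x. f (c + x) \<partial>lborel)"
    by (subst nn_integral_distr) auto
  finally show ?thesis by simp
qed

lemma gd_tail:
  fixes u :: "'a::euclidean_space" and t :: real
  assumes u: "norm u = 1" and t: "t \<ge> 0"
  assumes tot: "(\<integral>\<^sup>+x. ennreal (gd (x::'a)) \<partial>lborel) = 1"
  shows "emeasure (density lborel (\<lambda>x. ennreal (gd x))) {x. t \<le> x \<bullet> u} \<le> ennreal (exp (- t\<^sup>2 / 2))"
proof -
  have [measurable]: "{x::'a. t \<le> x \<bullet> u} \<in> sets borel" by measurable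
  have "emeasure (density lborel (\<lambda>x. ennreal (gd x))) {x. t \<le> x \<bullet> u}
      = (\<integral>\<^sup>+x. ennreal (gd x) * indicator {x. t \<le> x \<bullet> u} x \<partial>lborel)"
    by (subst emeasure_density) auto
  also have "\<dots> \<le> (\<integral>\<^sup>+x. ennreal (gd x) * ennreal (exp (t * (x \<bullet> u) - t\<^sup>2)) \<partial>lborel)"
  proof (rule nn_integral_mono)
    fix x :: 'a
    have "indicator {x. t \<le> x \<bullet> u} x \<le> ennreal (exp (t * (x \<bullet> u) - t\<^sup>2))"
    proof (cases "t \<le> x \<bullet> u")
      case True
      then have "0 \<le> t * (x \<bullet> u) - t\<^sup>2" using t
        by (simp add: power2_eq_square mult_left_mono)
      then show ?thesis using True by (simp add: indicator_def)
    qed (simp add: indicator_def)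
    then show "ennreal (gd x) * indicator {x. t \<le> x \<bullet> u} x \<le> ennreal (gd x) * ennreal (exp (t * (x \<bullet> u) - t\<^sup>2))"
      by (rule mult_left_mono) auto
  qed
  also have "\<dots> = (\<integral>\<^sup>+x. ennreal (exp (- t\<^sup>2 / 2)) * ennreal (gd (- (t *\<^sub>R u) + x)) \<partial>lborel)"
  proof (rule nn_integral_cong)
    fix x :: 'a
    have n: "(norm (- (t *\<^sub>R u) + x))\<^sup>2 = (norm x)\<^sup>2 - 2 * t * (x \<bullet> u) + t\<^sup>2"
    proof -
      have "(norm (- (t *\<^sub>R u) + x))\<^sup>2 = (- (t *\<^sub>R u) + x) \<bullet> (- (t *\<^sub>R u) + x)"
        by (rule power2_norm_eq_inner)
      also have "\<dots> = x \<bullet> x - 2 * t * (x \<bullet> u) + t\<^sup>2 * (u \<bullet> u)"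
        by (simp add: inner_add_left inner_add_right inner_commute power2_eq_square algebra_simps)
      also have "u \<bullet> u = 1" using u by (simp add: norm_eq_1)
      also have "x \<bullet> x = (norm x)\<^sup>2" by (simp add: power2_norm_eq_inner)
      finally show ?thesis by simp
    qed
    have "gd x * exp (t * (x \<bullet> u) - t\<^sup>2) = exp (- t\<^sup>2 / 2) * gd (- (t *\<^sub>R u) + x)"
      unfolding gd_def n by (simp add: exp_add[symmetric] field_simps)
    then show "ennreal (gd x) * ennreal (exp (t * (x \<bullet> u) - t\<^sup>2)) = ennreal (exp (- t\<^sup>2 / 2)) * ennreal (gd (- (t *\<^sub>R u) + x))"
      by (simp add: ennreal_mult'[symmetric] gd_def)
  qed
  also have "\<dots> = ennreal (exp (- t\<^sup>2 / 2)) * (\<integral>\<^sup>+x. ennreal (gd (- (t *\<^sub>R u) + x)) \<partial>lborel)"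
    by (rule nn_integral_cmult) measurable
  also have "(\<integral>\<^sup>+x. ennreal (gd (- (t *\<^sub>R u) + x)) \<partial>lborel) = 1"
    using shift_int[of "\<lambda>x. ennreal (gd x)" "- (t *\<^sub>R u)"] tot by simp
  finally show ?thesis by simp
qed

lemma gd_total: "(\<integral>\<^sup>+x. ennreal (gd (x::'a::euclidean_space)) \<partial>lborel) = 1"
  unfolding gd_def by (rule gauss_total)

lemma sq_expand:
  fixes a b :: "'a::real_inner"
  shows "(norm (a + b))\<^sup>2 = (norm a)\<^sup>2 + 2 * (a \<bullet> b) + (norm b)\<^sup>2"
proof -
  have "(norm (a + b))\<^sup>2 = (a + b) \<bullet> (a + b)" by (rule power2_norm_eq_inner)
  also have "\<dots> = a \<bullet> a + 2 * (a \<bullet> b) + b \<bullet> b"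
    by (simp add: inner_add_left inner_add_right inner_commute)
  finally show ?thesis by (simp add: power2_norm_eq_inner)
qed

lemma geom:
  fixes \<mu> ci cj \<xi> :: "'a::real_inner" and \<sigma> t R :: real
  assumes d: "norm (\<mu> - ci) \<le> R"
    and vor: "norm (\<mu> + \<sigma> *\<^sub>R \<xi> - cj) \<le> norm (\<mu> + \<sigma> *\<^sub>R \<xi> - ci)"
    and s: "\<sigma> > 0" and t: "t \<ge> 0" and R: "R \<ge> 0"
    and A: "cj \<noteq> ci \<Longrightarrow> \<xi> \<bullet> ((1 / norm (cj - ci)) *\<^sub>R (cj - ci)) < t"
  shows "norm (\<mu> - cj) \<le> R + 2 * \<sigma> * t"
proof (cases "cj = ci")
  case True
  have "0 \<le> 2 * \<sigma> * t" using s t by simp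
  then show ?thesis using d True by auto
next
  case False
  define w where "w = cj - ci"
  define nw where "nw = norm w"
  have nw: "nw > 0" using False by (simp add: nw_def w_def)
  have "\<xi> \<bullet> w / nw < t" using A[OF False] by (simp add: w_def nw_def inner_commute divide_inverse mult.commute)
  then have xw: "\<xi> \<bullet> w \<le> t * nw" using nw by (simp add: divide_less_eq)
  define a where "a = norm (\<mu> - cj)"
  have e1: "(norm (\<mu> + \<sigma> *\<^sub>R \<xi> - cj))\<^sup>2 = a\<^sup>2 + 2 * \<sigma> * ((\<mu> - cj) \<bullet> \<xi>) + (norm (\<sigma> *\<^sub>R \<xi>))\<^sup>2"
    using sq_expand[of "\<mu> - cj" "\<sigma> *\<^sub>R \<xi>"] by (simp add: a_def algebra_simps)
  have e2: "(norm (\<mu> + \<sigma> *\<^sub>R \<xi> - ci))\<^sup>2 = (norm (\<mu> - ci))\<^sup>2 + 2 * \<sigma> * ((\<mu> - ci) \<bullet> \<xi>) + (norm (\<sigma> *\<^sub>R \<xi>))\<^sup>2"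
    using sq_expand[of "\<mu> - ci" "\<sigma> *\<^sub>R \<xi>"] by (simp add: algebra_simps)
  have "(norm (\<mu> + \<sigma> *\<^sub>R \<xi> - cj))\<^sup>2 \<le> (norm (\<mu> + \<sigma> *\<^sub>R \<xi> - ci))\<^sup>2"
    using vor by (simp add: power_mono)
  then have "a\<^sup>2 \<le> (norm (\<mu> - ci))\<^sup>2 + 2 * \<sigma> * ((\<mu> - ci) \<bullet> \<xi> - (\<mu> - cj) \<bullet> \<xi>)"
    unfolding e1 e2 by (simp add: algebra_simps)
  also have "(\<mu> - ci) \<bullet> \<xi> - (\<mu> - cj) \<bullet> \<xi> = \<xi> \<bullet> w"
    by (simp add: w_def inner_diff_left inner_diff_right inner_commute)
  finally have "a\<^sup>2 \<le> (norm (\<mu> - ci))\<^sup>2 + 2 * \<sigma> * (\<xi> \<bullet> w)" .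
  moreover have "(norm (\<mu> - ci))\<^sup>2 \<le> R\<^sup>2" using d by (simp add: power_mono)
  moreover have "2 * \<sigma> * (\<xi> \<bullet> w) \<le> 2 * \<sigma> * (t * nw)" using xw s by simp
  moreover have "nw \<le> a + R"
  proof -
    have "w = (\<mu> - ci) - (\<mu> - cj)" by (simp add: w_def)
    then have "nw \<le> norm (\<mu> - ci) + a" unfolding nw_def a_def
      by (metis norm_triangle_ineq4)
    then show ?thesis using d by simp
  qed
  moreover have "0 \<le> 2 * \<sigma> * t" using s t by simp
  moreover have "(2 * \<sigma> * t) * nw \<le> (2 * \<sigma> * t) * (a + R)"
    using calculation(4,5) by (simp add: mult_left_mono)
  ultimately have key: "a\<^sup>2 \<le> R\<^sup>2 + (2 * \<sigma> * t) * (a + R)"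
    by (simp add: algebra_simps)
  show ?thesis
  proof (rule ccontr)
    assume "\<not> ?thesis"
    then have gt: "a - R > 2 * \<sigma> * t" by (simp add: a_def)
    have pos: "a + R > 0" using gt s t R by (smt (verit) mult_nonneg_nonneg)
    have "(a - R) * (a + R) > (2 * \<sigma> * t) * (a + R)"
      using mult_strict_right_mono[OF gt pos] .
    then show False using key by (simp add: power2_eq_square algebra_simps)
  qed
qed


theorem lemma5p2:
  fixes c :: "nat \<Rightarrow> real ^ 'n::finite"
    and V :: "nat \<Rightarrow> (real ^ 'n) set"
    and k :: nat and \<sigma> R \<epsilon> :: real and \<mu> :: "real ^ 'n"
  assumes "k \<ge> 1"
    and "voronoi_partition k c V"
    and "\<sigma> > 0" and "R \<ge> 0" and "0 < \<epsilon>" and "\<epsilon> < 1"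
    and "\<exists>i<k. norm (\<mu> - c i) \<le> R"
  shows "\<exists>A \<in> sets std_gaussian.
           measure std_gaussian A \<ge> 1 - \<epsilon> \<and>
           (\<forall>\<xi>\<in>A. \<forall>i'<k. \<mu> + \<sigma> *\<^sub>R \<xi> \<in> V i' \<longrightarrow>
              norm (\<mu> - c i') \<le> 3 * R + 2 * sqrt 2 * \<sigma> * sqrt (ln (real k / \<epsilon>)))"
  
proof -
  let ?M = "std_gaussian :: (real ^ 'n) measure"
  have Meq: "?M = density lborel (\<lambda>x. ennreal (gd x))"
    unfolding std_gaussian_def gd_def by simp
  interpret P: prob_space ?M
  proof (rule prob_spaceI)
    show "emeasure ?M (space ?M) = 1"
      unfolding Meq by (simp add: emeasure_density gd_total)
  qed
  have spM: "space ?M = UNIV" unfolding Meq by simp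
  have setsM: "sets ?M = sets borel" unfolding Meq by simp
  obtain i where i: "i < k" "norm (\<mu> - c i) \<le> R" using assms(7) by blast
  have kpos: "real k > 0" using assms(1) by simp
  have q: "real k / \<epsilon> > 1" using assms(1,5,6) by (simp add: less_divide_eq)
  have lnpos: "ln (real k / \<epsilon>) > 0" using q by simp
  define t where "t = sqrt (2 * ln (real k / \<epsilon>))"
  have t0: "t \<ge> 0" unfolding t_def using lnpos by simp
  have tsq: "t\<^sup>2 = 2 * ln (real k / \<epsilon>)" unfolding t_def using lnpos by simp
  have et: "exp (- t\<^sup>2 / 2) = \<epsilon> / real k"
    using q assms(5) kpos by (simp add: tsq exp_minus exp_ln)
  define J where "J = {j. j < k \<and> c j \<noteq> c i}"
  define u where "u j = (1 / norm (c j - c i)) *\<^sub>R (c j - c i)" for j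
  define B where "B j = {x :: real ^ 'n. t \<le> x \<bullet> u j}" for j
  have finJ: "finite J" unfolding J_def by simp
  have cardJ: "card J \<le> k"
    using card_mono[of "{..<k}" J] unfolding J_def by auto
  have Bsets: "B j \<in> sets ?M" for j unfolding B_def setsM by measurable
  have Bm: "measure ?M (B j) \<le> \<epsilon> / real k" if "j \<in> J" for j
  proof -
    have nu: "norm (u j) = 1" using that unfolding J_def u_def by simp
    have "emeasure ?M (B j) \<le> ennreal (\<epsilon> / real k)"
      using gd_tail[OF nu t0 gd_total] unfolding Meq B_def et .
    then show ?thesis using P.emeasure_eq_measure assms(5) kpos
      by (simp add: ennreal_le_iff)
  qed
  define A where "A = UNIV - (\<Union>j\<in>J. B j)"
  have UB: "(\<Union>j\<in>J. B j) \<in> sets ?M" using Bsets finJ by auto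
  have "measure ?M (\<Union>j\<in>J. B j) \<le> (\<Sum>j\<in>J. measure ?M (B j))"
    by (rule P.finite_measure_subadditive_finite) (use finJ Bsets in auto)
  also have "\<dots> \<le> (\<Sum>j\<in>J. \<epsilon> / real k)" by (rule sum_mono) (rule Bm)
  also have "\<dots> = real (card J) * (\<epsilon> / real k)" by simp
  also have "\<dots> \<le> real k * (\<epsilon> / real k)"
    by (rule mult_right_mono) (use cardJ assms(5) kpos in auto)
  also have "\<dots> = \<epsilon>" using kpos by simp
  finally have mU: "measure ?M (\<Union>j\<in>J. B j) \<le> \<epsilon>" .
  have mA: "measure ?M A = 1 - measure ?M (\<Union>j\<in>J. B j)"
    unfolding A_def using P.prob_compl[OF UB] spM by simp
  have Asets: "A \<in> sets ?M" unfolding A_def using sets.compl_sets[OF UB] spM by simp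
  show ?thesis
  proof (intro bexI[OF _ Asets] conjI ballI allI impI)
    show "measure ?M A \<ge> 1 - \<epsilon>" using mA mU by simp
  next
    fix \<xi> i' assume xA: "\<xi> \<in> A" and i': "i' < k" and Y: "\<mu> + \<sigma> *\<^sub>R \<xi> \<in> V i'"
    have vor: "norm (\<mu> + \<sigma> *\<^sub>R \<xi> - c i') \<le> norm (\<mu> + \<sigma> *\<^sub>R \<xi> - c i)"
      using assms(2) i' Y i(1) unfolding voronoi_partition_def by blast
    have Ac: "\<xi> \<bullet> ((1 / norm (c i' - c i)) *\<^sub>R (c i' - c i)) < t" if "c i' \<noteq> c i"
    proof -
      have "i' \<in> J" using that i' by (simp add: J_def)
      then have "\<xi> \<notin> B i'" using xA by (auto simp: A_def)
      then show ?thesis by (simp add: B_def u_def)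
    qed
    have "norm (\<mu> - c i') \<le> R + 2 * \<sigma> * t"
      by (rule geom[OF i(2) vor assms(3) t0 assms(4) Ac])
    also have "2 * \<sigma> * t = 2 * sqrt 2 * \<sigma> * sqrt (ln (real k / \<epsilon>))"
      by (simp add: t_def real_sqrt_mult)
    finally show "norm (\<mu> - c i') \<le> 3 * R + 2 * sqrt 2 * \<sigma> * sqrt (ln (real k / \<epsilon>))"
      using assms(4) by simp
  qed
qed

end
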